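(* The flag curvature of the Funk–Finsler metric $\mathcal{F}$ on $\mathbb{D}_K(1)$ at the centre $\mathbf{0}=(0,0)$ is independent of the direction $\xi\neq0$ and equals $$\mathbf{K}(\mathbf{0},\xi)=-\Big(1-\tfrac34(1-r^2)^2\Big)=-\Big(1-\tfrac34\Big(\tfrac{4e^2}{(e^2+1)^2}\Big)^2\Big)<0.$$
   Context: $r=\frac{e^2-1}{e^2+1}$, $\mathbb{D}_K(1)=\{x\in\mathbb{R}^2:|x|<r\}$, $\mathcal{F}(x,\xi)=\frac{\sqrt{(r^2-|x|^2)|\xi|^2+\langle x,\xi\rangle^2}}{r^2-|x|^2}+\frac{(1-r^2)\langle x,\xi\rangle}{(r^2-|x|^2)(1-|x|^2)}$. The flag curvature of a 2-dimensional Finsler metric $F$ is $\mathbf{K}=\mathrm{Ric}/F^2$ where $\mathrm{Ric}=R^i_i$ is the trace of the Riemann curvature $R^i_k=2\partial_{x^k}G^i-\xi^j\partial_{x^j}\partial_{\xi^k}G^i+2G^j\partial_{\xi^j}\partial_{\xi^k}G^i-\partial_{\xi^j}G^i\,\partial_{\xi^k}G^j$ and $G^i$ are the spray coefficients $G^i=\frac14g^{i\ell}\{[F^2]_{x^k\xi^\ell}\xi^k-[F^2]_{x^\ell}\}$. *)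

theory Defs
  imports "HOL-Analysis.Analysis"
begin

text \<open>Phase-space points of the tangent bundle of an open subset of R^2 are encoded as
  functions z :: nat => real, where z 0, z 1 are the position coordinates x^1, x^2 and
  z 2, z 3 are the direction coordinates xi^1, xi^2.  Index i in {0,1} corresponds to
  the coordinate x^(i+1), and index 2+i to xi^(i+1).\<close>

definition pt :: "real \<times> real \<Rightarrow> real \<times> real \<Rightarrow> nat \<Rightarrow> real" where
  "pt x xi = (\<lambda>i. if i = 0 then fst x else if i = 1 then snd x
                  else if i = 2 then fst xi else snd xi)"

definition pd :: "nat \<Rightarrow> ((nat \<Rightarrow> real) \<Rightarrow> real) \<Rightarrow> (nat \<Rightarrow> real) \<Rightarrow> real" where
  "pd k f z = deriv (\<lambda>t. f (z(k := t))) (z k)"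

definition rK :: real where
  "rK = (exp 2 - 1) / (exp 2 + 1)"

definition DK1 :: "(real \<times> real) set" where
  "DK1 = {x. sqrt ((fst x)^2 + (snd x)^2) < rK}"

definition FF :: "(nat \<Rightarrow> real) \<Rightarrow> real" where
  "FF z = (let r = rK; x1 = z 0; x2 = z 1; y1 = z 2; y2 = z 3;
              nx = x1^2 + x2^2; ny = y1^2 + y2^2; ip = x1*y1 + x2*y2 in
           sqrt ((r^2 - nx) * ny + ip^2) / (r^2 - nx)
           + (1 - r^2) * ip / ((r^2 - nx) * (1 - nx)))"

definition Fsq :: "((nat \<Rightarrow> real) \<Rightarrow> real) \<Rightarrow> (nat \<Rightarrow> real) \<Rightarrow> real" where
  "Fsq F z = (F z)^2"

definition gT :: "((nat \<Rightarrow> real) \<Rightarrow> real) \<Rightarrow> nat \<Rightarrow> nat \<Rightarrow> (nat \<Rightarrow> real) \<Rightarrow> real" where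
  "gT F i l z = (1/2) * pd (2+i) (pd (2+l) (Fsq F)) z"

definition gInv :: "((nat \<Rightarrow> real) \<Rightarrow> real) \<Rightarrow> nat \<Rightarrow> nat \<Rightarrow> (nat \<Rightarrow> real) \<Rightarrow> real" where
  "gInv F i l z = (let d = gT F 0 0 z * gT F 1 1 z - gT F 0 1 z * gT F 1 0 z in
     if i = 0 \<and> l = 0 then gT F 1 1 z / d
     else if i = 1 \<and> l = 1 then gT F 0 0 z / d
     else - gT F i l z / d)"

definition Gspr :: "((nat \<Rightarrow> real) \<Rightarrow> real) \<Rightarrow> nat \<Rightarrow> (nat \<Rightarrow> real) \<Rightarrow> real" where
  "Gspr F i z = (1/4) * (\<Sum>l<2. gInv F i l z *
      ((\<Sum>k<2. pd k (pd (2+l) (Fsq F)) z * z (2+k)) - pd l (Fsq F) z))"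

definition Riem :: "((nat \<Rightarrow> real) \<Rightarrow> real) \<Rightarrow> nat \<Rightarrow> nat \<Rightarrow> (nat \<Rightarrow> real) \<Rightarrow> real" where
  "Riem F i k z =
     2 * pd k (Gspr F i) z
     - (\<Sum>j<2. z (2+j) * pd j (pd (2+k) (Gspr F i)) z)
     + 2 * (\<Sum>j<2. Gspr F j z * pd (2+j) (pd (2+k) (Gspr F i)) z)
     - (\<Sum>j<2. pd (2+j) (Gspr F i) z * pd (2+k) (Gspr F j) z)"

definition Ric :: "((nat \<Rightarrow> real) \<Rightarrow> real) \<Rightarrow> (nat \<Rightarrow> real) \<Rightarrow> real" where
  "Ric F z = (\<Sum>i<2. Riem F i i z)"

definition flag_curv :: "((nat \<Rightarrow> real) \<Rightarrow> real) \<Rightarrow> (nat \<Rightarrow> real) \<Rightarrow> real" where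
  "flag_curv F z = Ric F z / (F z)^2"

end

theory Submission
  imports Defs
begin


definition "bt = 1 - rK^2"
definition "ax z = rK^2 - ((z 0)^2 + (z (1::nat))^2)"
definition "cx z = 1 - ((z 0)^2 + (z (1::nat))^2)"
definition "px z = z 0 * z 2 + z 1 * z (3::nat)"
definition "qx z = (z 2)^2 + (z (3::nat))^2"
definition "Sx z = sqrt (ax z * qx z + (px z)^2)"

definition "UU = {z::nat\<Rightarrow>real. (z 0)^2 + (z 1)^2 < rK^2 \<and> (z 2)^2 + (z 3)^2 > 0}"

definition dA :: "nat \<Rightarrow> (nat \<Rightarrow> real) \<Rightarrow> real" where "dA m z = (if m = 0 then -2 * z 0 else if m = (1::nat) then -2 * z 1 else 0)"
definition dP :: "nat \<Rightarrow> (nat \<Rightarrow> real) \<Rightarrow> real" where "dP m z = (if m = 0 then z 2 else if m = (1::nat) then z 3 else if m = 2 then z 0 else z 1)"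
definition dQ :: "nat \<Rightarrow> (nat \<Rightarrow> real) \<Rightarrow> real" where "dQ m z = (if m = 2 then 2 * z 2 else if m = (3::nat) then 2 * z 3 else 0)"
definition "dS m z = (dA m z * qx z + ax z * dQ m z + 2 * px z * dP m z) / (2 * Sx z)"

lemma exp2: "exp (2::real) > 1" by simp
lemma rK_pos: "0 < rK" and rK_lt1: "rK < 1"
  proof -
  have "0 < exp (2::real) - 1" "0 < 1 + exp (2::real)" using exp2 by linarith+
  then show "0 < rK" "rK < 1" unfolding rK_def by (auto simp: divide_simps add.commute)
qed

lemma FF_eq: "FF z = Sx z / ax z + bt * px z / (ax z * cx z)"
  unfolding FF_def Sx_def ax_def cx_def px_def qx_def bt_def Let_def by simp

lemma line_a: "m < 4 \<Longrightarrow> ((\<lambda>t. ax (z(m:=t))) has_real_derivative dA m z) (at (z m))"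
  unfolding ax_def dA_def
  by (cases "m = 0"; cases "m = 1"; simp; (rule derivative_eq_intros refl | simp)+)

lemma line_c: "m < 4 \<Longrightarrow> ((\<lambda>t. cx (z(m:=t))) has_real_derivative dA m z) (at (z m))"
  unfolding cx_def dA_def
  by (cases "m = 0"; cases "m = 1"; simp; (rule derivative_eq_intros refl | simp)+)
lemma line_p: "m < 4 \<Longrightarrow> ((\<lambda>t. px (z(m:=t))) has_real_derivative dP m z) (at (z m))"
  unfolding px_def dP_def
  by (cases "m = 0"; cases "m = 1"; cases "m = 2"; simp; (rule derivative_eq_intros refl | simp)+)
lemma line_q: "m < 4 \<Longrightarrow> ((\<lambda>t. qx (z(m:=t))) has_real_derivative dQ m z) (at (z m))"
  unfolding qx_def dQ_def
  by (cases "m = 2"; cases "m = 3"; simp; (rule derivative_eq_intros refl | simp)+)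
lemma line_v: "((\<lambda>t. (z(m:=t)) j) has_real_derivative (if j = m then 1 else 0)) (at (z m))"
  by (cases "j = m"; simp)

lemma UU_facts: assumes "z \<in> UU"
  shows "ax z > 0" "cx z > 0" "qx z > 0" "ax z * qx z + (px z)^2 > 0" "Sx z > 0" "bt > 0" "cx z > bt"
proof -
  have a: "ax z > 0" using assms unfolding UU_def ax_def by simp
  have q: "qx z > 0" using assms unfolding UU_def qx_def by simp
  have b: "bt > 0" unfolding bt_def using rK_pos rK_lt1 by (simp add: power_less_one_iff)
  have cb: "cx z > bt" using assms unfolding UU_def cx_def bt_def by simp
  have X: "ax z * qx z + (px z)^2 > 0" using a q by (simp add: add_pos_nonneg)
  have S: "Sx z > 0" unfolding Sx_def using X by simp
  have c: "cx z > 0" using b cb by linarith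
  show "ax z > 0" "cx z > 0" "qx z > 0" "ax z * qx z + (px z)^2 > 0" "Sx z > 0" "bt > 0" "cx z > bt"
    by (fact a c q X S b cb)+
qed

lemma line_X: assumes "m < 4"
  shows "((\<lambda>t. ax (z(m:=t)) * qx (z(m:=t)) + (px (z(m:=t)))^2) has_real_derivative
     (dA m z * qx z + ax z * dQ m z + 2 * px z * dP m z)) (at (z m))"
proof -
  show ?thesis
    by (rule derivative_eq_intros line_a line_q line_p assms refl)+ simp
qed

lemma line_S: assumes "z \<in> UU" "m < 4"
  shows "((\<lambda>t. Sx (z(m:=t))) has_real_derivative dS m z) (at (z m))"
proof -
  note f = UU_facts[OF assms(1)]
  have "((\<lambda>t. sqrt (ax (z(m:=t)) * qx (z(m:=t)) + (px (z(m:=t)))^2)) has_real_derivative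
     (dA m z * qx z + ax z * dQ m z + 2 * px z * dP m z) * (inverse (sqrt (ax z * qx z + (px z)^2)) / 2)) (at (z m))"
  proof -
    have h: "DERIV sqrt (ax (z(m:=z m)) * qx (z(m:=z m)) + (px (z(m:=z m)))^2) :>
       inverse (sqrt (ax z * qx z + (px z)^2)) / 2"
      using DERIV_real_sqrt[of "ax z * qx z + (px z)^2"] f(4) by simp
    show ?thesis using DERIV_chain2[OF h line_X[OF assms(2)]] by (simp add: mult.commute)
  qed
  then show ?thesis unfolding Sx_def[abs_def] dS_def
    by (simp add: field_simps)
qed

definition "Fd m z = (dS m z * ax z - Sx z * dA m z)/(ax z)^2
   + bt*(dP m z*(ax z*cx z) - px z*(dA m z*cx z + ax z*dA m z))/(ax z*cx z)^2"

lemma line_S': "z \<in> UU \<Longrightarrow> m < 4 \<Longrightarrow> D = dS m z \<Longrightarrow> ((\<lambda>t. Sx (z(m:=t))) has_real_derivative D) (at (z m))"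
  using line_S by simp
lemma line_a': "m < 4 \<Longrightarrow> D = dA m z \<Longrightarrow> ((\<lambda>t. ax (z(m:=t))) has_real_derivative D) (at (z m))"
  using line_a by simp
lemma line_c': "m < 4 \<Longrightarrow> D = dA m z \<Longrightarrow> ((\<lambda>t. cx (z(m:=t))) has_real_derivative D) (at (z m))"
  using line_c by simp
lemma line_p': "m < 4 \<Longrightarrow> D = dP m z \<Longrightarrow> ((\<lambda>t. px (z(m:=t))) has_real_derivative D) (at (z m))"
  using line_p by simp
lemma line_q': "m < 4 \<Longrightarrow> D = dQ m z \<Longrightarrow> ((\<lambda>t. qx (z(m:=t))) has_real_derivative D) (at (z m))"
  using line_q by simp
lemma line_v': "D = (if j = m then 1 else 0) \<Longrightarrow> ((\<lambda>t. (z(m:=t)) j) has_real_derivative D) (at (z m))"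
  using line_v by simp
lemmas lines = line_S' line_a' line_c' line_p' line_q' line_v'

lemma line_F: assumes "z \<in> UU" "m < 4"
  shows "((\<lambda>t. FF (z(m:=t))) has_real_derivative Fd m z) (at (z m))"
proof -
  note f = UU_facts[OF assms(1)]
  show ?thesis unfolding FF_eq Fd_def
    apply (rule DERIV_cong)
     apply (rule derivative_eq_intros lines assms refl | (use f in \<open>simp; fail\<close>))+
    using f apply (simp_all add: field_simps power2_eq_square)
    done
qed

definition "Fy l z = (ax z * z (2+l) + px z * z l)/(Sx z * ax z) + bt * z l/(ax z * cx z)"

definition "dl i j = (if i = j then (1::real) else 0)"

definition "Fyd l m z = ((dA m z * z (2+l) + ax z * dl m (2+l) + dP m z * z l + px z * dl m l) * (Sx z * ax z)
     - (ax z * z (2+l) + px z * z l) * (dS m z * ax z + Sx z * dA m z)) / (Sx z * ax z)^2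
   + bt * (dl m l * (ax z * cx z) - z l * (dA m z * cx z + ax z * dA m z)) / (ax z * cx z)^2"

lemma S2: "z \<in> UU \<Longrightarrow> (Sx z)^2 = ax z * qx z + (px z)^2"
  using UU_facts(4)[of z] unfolding Sx_def by simp

lemmas nsuc = numeral_2_eq_2 numeral_3_eq_3 One_nat_def

definition "vv l z = (if l = (0::nat) then - z (3::nat) else z 2)"

definition "NN z = 2 * Sx z * px z / (ax z)^2 + bt * (qx z * ax z * cx z + 2 * (px z)^2 * (cx z + ax z)) / (ax z * cx z)^2"



lemma poly_E2: fixes R a p q x1 x2 y1 y2 :: real
  assumes "a = R^2-(x1^2+x2^2)" "p = x1*y1+x2*y2" "q = y1^2+y2^2"
  shows "(a * 1 + x1*x1)*(a*q+p^2) - (a*y1+p*x1)*(a*y1+p*x1) = a*R^2*(-y2)*(-y2)"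
    "(a * 0 + x2*x1)*(a*q+p^2) - (a*y1+p*x1)*(a*y2+p*x2) = a*R^2*(-y2)*y1"
    "(a * 0 + x1*x2)*(a*q+p^2) - (a*y2+p*x2)*(a*y1+p*x1) = a*R^2*y1*(-y2)"
    "(a * 1 + x2*x2)*(a*q+p^2) - (a*y2+p*x2)*(a*y2+p*x2) = a*R^2*y1*y1"
  using assms by algebra+
lemma E2: assumes "z \<in> UU" "l < 2" "i < 2"
  shows "Fyd l (2+i) z = rK^2 * vv l z * vv i z / (Sx z)^3"
proof -
  note f = UU_facts[OF assms(1)] and s2 = S2[OF assms(1)]
  define u where "u j = ax z * z (2+j) + px z * z j" for j
  have i01: "i = 0 \<or> i = 1" using assms(3) by auto
  have l01: "l = 0 \<or> l = 1" using assms(2) by auto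
  have dS: "dS (2+i) z = u i / Sx z"
  proof -
    show ?thesis unfolding dS_def dA_def dQ_def dP_def u_def using i01 f
      by (elim disjE) (simp_all add: field_simps nsuc)
  qed
  have "Fyd l (2+i) z = ((ax z * dl i l + z i * z l) * (Sx z * ax z) - u l * (u i * ax z / Sx z)) / (Sx z * ax z)^2"
    unfolding Fyd_def dS u_def dl_def dA_def dP_def using i01 l01
    by (elim disjE) (simp_all add: nsuc)
  also have "... = ((ax z * dl i l + z i * z l) * (Sx z)^2 - u l * u i) / ((Sx z)^3 * ax z)"
    using f by (simp add: field_simps power2_eq_square power3_eq_cube)
  also have "(ax z * dl i l + z i * z l) * (Sx z)^2 - u l * u i = ax z * rK^2 * vv l z * vv i z"
  proof -
    have h: "ax z = rK^2-((z 0)^2+(z 1)^2)" "px z = z 0 * z 2 + z 1 * z 3" "qx z = (z 2)^2 + (z 3)^2"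
      unfolding ax_def px_def qx_def by simp_all
    note P = poly_E2[OF h]
    show ?thesis using i01 l01
    proof (elim disjE)
      assume "i = 0" "l = 0" then show ?thesis using P(1) by (simp add: u_def vv_def dl_def s2)
    next
      assume "i = 0" "l = 1" then show ?thesis using P(3) by (simp add: u_def vv_def dl_def s2)
    next
      assume "i = 1" "l = 0" then show ?thesis using P(2) by (simp add: u_def vv_def dl_def s2)
    next
      assume "i = 1" "l = 1" then show ?thesis using P(4) by (simp add: u_def vv_def dl_def s2)
    qed
  qed
  finally show ?thesis using f by (simp add: field_simps)
qed


lemma E3: assumes "z \<in> UU" "l < 2"
  shows "Fyd l 0 z * z 2 + Fyd l 1 z * z 3 = Fd l z"
proof -
  note f = UU_facts[OF assms(1)] and s2 = S2[OF assms(1)]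
  define u where "u = ax z * z (2+l) + px z * z l"
  define T2 where "T2 = bt * (z (2+l) * ax z * cx z + 2 * px z * z l * (cx z + ax z)) / (ax z * cx z)^2"
  have l01: "l = 0 \<or> l = 1" using assms(2) by auto
  have A: "Fyd l 0 z * z 2 + Fyd l 1 z * z 3 = (qx z * z l - px z * z (2+l)) / (Sx z * ax z) + 2 * px z * u / (Sx z * (ax z)^2) + T2"
    unfolding Fyd_def dS_def dA_def dP_def dQ_def dl_def T2_def u_def qx_def px_def using f l01
    by (elim disjE) (simp_all add: field_simps nsuc power2_eq_square)
  have B: "(qx z * z l - px z * z (2+l)) / (Sx z * ax z) + 2 * px z * u / (Sx z * (ax z)^2)
     = (px z * z (2+l) - z l * qx z) / (Sx z * ax z) + 2 * Sx z * z l / (ax z)^2"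
  proof -
    have "(qx z * z l - px z * z (2+l)) * ax z + 2 * px z * u = (px z * z (2+l) - z l * qx z) * ax z + 2 * (Sx z)^2 * z l"
      unfolding s2 u_def by (simp add: algebra_simps power2_eq_square)
    then show ?thesis using f by (simp add: field_simps power2_eq_square)
  qed
  have C: "(px z * z (2+l) - z l * qx z) / (Sx z * ax z) + 2 * Sx z * z l / (ax z)^2 + T2 = Fd l z"
    unfolding Fd_def dS_def dA_def dP_def dQ_def T2_def using f l01
    by (elim disjE) (simp_all add: field_simps nsuc power2_eq_square)
  show ?thesis by (simp only: A B C)
qed
lemma E1: assumes "z \<in> UU" shows "Fy 0 z * z 2 + Fy 1 z * z 3 = FF z"
proof -
  note f = UU_facts[OF assms] and s2 = S2[OF assms]
  have "Fy 0 z * z 2 + Fy 1 z * z 3 = (ax z * qx z + (px z)^2)/(Sx z * ax z) + bt * px z/(ax z * cx z)"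
    unfolding Fy_def using f by (simp add: field_simps px_def qx_def power2_eq_square nsuc)
  also have "... = Sx z / ax z + bt * px z/(ax z * cx z)"
    unfolding s2[symmetric] using f by (simp add: power2_eq_square)
  finally show ?thesis unfolding FF_eq .
qed


lemma E4: assumes "z \<in> UU"
  shows "Fd 0 z * z 2 + Fd 1 z * z 3 = NN z"
proof -
  note f = UU_facts[OF assms(1)]
  show ?thesis
    unfolding Fd_def NN_def dS_def dA_def dP_def dQ_def qx_def px_def using f
    by (simp add: field_simps nsuc power2_eq_square)
qed


lemma Fd_Fy: assumes "z \<in> UU" "l < 2" shows "Fd (2+l) z = Fy l z"
proof -
  note f = UU_facts[OF assms(1)]
  have l01: "l = 0 \<or> l = 1" using assms(2) by auto
  show ?thesis
    unfolding Fd_def Fy_def dS_def dA_def dP_def dQ_def using f l01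
    by (elim disjE) (simp_all add: field_simps nsuc power2_eq_square)
qed


lemma FF_pos: assumes "z \<in> UU" shows "FF z > 0"
proof -
  note f = UU_facts[OF assms(1)] and s2 = S2[OF assms(1)]
  have "(bt * \<bar>px z\<bar>)^2 < (cx z * Sx z)^2"
  proof -
    have "(bt * \<bar>px z\<bar>)^2 = bt^2 * (px z)^2" by (simp add: power_mult_distrib)
    also have "... \<le> (cx z)^2 * (px z)^2"
      using f by (intro mult_right_mono power_mono) auto
    also have "... < (cx z)^2 * (ax z * qx z + (px z)^2)"
      using f by (simp add: mult_pos_pos)
    finally show ?thesis using s2 by (simp add: power_mult_distrib)
  qed
  moreover have "0 \<le> cx z * Sx z" using f by simp
  ultimately have "bt * \<bar>px z\<bar> < cx z * Sx z"
    by (rule power2_less_imp_less)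
  moreover have "bt * (- px z) \<le> bt * \<bar>px z\<bar>"
    using f by (intro mult_left_mono) auto
  ultimately have "0 < cx z * Sx z + bt * px z" by linarith
  then have "0 < (cx z * Sx z + bt * px z) / (ax z * cx z)" using f by simp
  also have "... = FF z" unfolding FF_eq using f by (simp add: field_simps)
  finally show ?thesis .
qed






lemma upd_cont: "continuous (at x) (\<lambda>t. (z(m:=t)) j)"
  by (cases "j = m") simp_all

lemma UU_ev: assumes "z \<in> UU" shows "eventually (\<lambda>t. z(m:=t) \<in> UU) (nhds (z m))"
proof -
  let ?h1 = "\<lambda>t. ((z(m:=t)) 0)^2 + ((z(m:=t)) 1)^2"
  let ?h2 = "\<lambda>t. ((z(m:=t)) 2)^2 + ((z(m:=t)) 3)^2"
  have c1: "continuous (at (z m)) ?h1" by (intro continuous_intros upd_cont)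
  have c2: "continuous (at (z m)) ?h2" by (intro continuous_intros upd_cont)
  have t1: "(?h1 \<longlongrightarrow> ?h1 (z m)) (nhds (z m))"
    using c1 unfolding continuous_at by (rule tendsto_at_iff_tendsto_nhds[of ?h1 "z m", THEN iffD1])
  have t2: "(?h2 \<longlongrightarrow> ?h2 (z m)) (nhds (z m))"
    using c2 unfolding continuous_at by (rule tendsto_at_iff_tendsto_nhds[of ?h2 "z m", THEN iffD1])
  have v1: "?h1 (z m) < rK^2" and v2: "?h2 (z m) > 0" using assms by (simp_all add: UU_def)
  have e1: "eventually (\<lambda>t. ?h1 t < rK^2) (nhds (z m))" using order_tendstoD(2)[OF t1 v1] .
  have e2: "eventually (\<lambda>t. ?h2 t > 0) (nhds (z m))" using order_tendstoD(1)[OF t2 v2] .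
  show ?thesis using eventually_conj[OF e1 e2] by (rule eventually_mono) (simp add: UU_def)
qed

lemma pd_DERIV: "((\<lambda>t. f (z(m:=t))) has_real_derivative D) (at (z m)) \<Longrightarrow> pd m f z = D"
  unfolding pd_def by (rule DERIV_imp_deriv)

lemma pd_cong: assumes "z \<in> UU" "\<And>w. w \<in> UU \<Longrightarrow> f w = g w" shows "pd m f z = pd m g z"
  unfolding pd_def
  by (rule deriv_cong_ev) (use UU_ev[OF assms(1), of m] assms(2) in \<open>auto elim: eventually_mono\<close>)

lemma pd_Fsq: assumes "z \<in> UU" "m < 4" shows "pd m (Fsq FF) z = 2 * FF z * Fd m z"
proof (rule pd_DERIV)
  show "((\<lambda>t. Fsq FF (z(m:=t))) has_real_derivative 2 * FF z * Fd m z) (at (z m))"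
    using DERIV_power[OF line_F[OF assms], of 2] unfolding Fsq_def by (simp add: ac_simps)
qed

lemma pd_Fsq_y: assumes "z \<in> UU" "l < 2" shows "pd (2+l) (Fsq FF) z = 2 * FF z * Fy l z"
  using pd_Fsq[OF assms(1), of "2+l"] Fd_Fy[OF assms] assms(2) by simp

lemma line_Fy: assumes "z \<in> UU" "m < 4" "l < 2"
  shows "((\<lambda>t. Fy l (z(m:=t))) has_real_derivative Fyd l m z) (at (z m))"
proof -
  note f = UU_facts[OF assms(1)]
  show ?thesis unfolding Fy_def[abs_def] Fyd_def
    apply (rule DERIV_cong)
     apply (rule derivative_eq_intros lines assms refl | (use f in \<open>simp; fail\<close>))+
    using f apply (simp add: field_simps power2_eq_square dl_def eq_commute[of m])
    done
qed

lemma pd2: assumes "z \<in> UU" "m < 4" "l < 2"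
  shows "pd m (pd (2+l) (Fsq FF)) z = 2 * (Fd m z * Fy l z + FF z * Fyd l m z)"
proof -
  have "pd m (pd (2+l) (Fsq FF)) z = pd m (\<lambda>w. 2 * FF w * Fy l w) z"
    by (rule pd_cong[OF assms(1)]) (rule pd_Fsq_y[OF _ assms(3)])
  also have "... = 2 * (Fd m z * Fy l z + FF z * Fyd l m z)"
  proof (rule pd_DERIV)
    show "((\<lambda>t. 2 * FF (z(m:=t)) * Fy l (z(m:=t))) has_real_derivative 2 * (Fd m z * Fy l z + FF z * Fyd l m z)) (at (z m))"
      apply (rule DERIV_cong)
       apply (rule derivative_eq_intros line_F[OF assms(1,2)] line_Fy[OF assms] refl)+
      apply (simp add: algebra_simps)
      done
  qed
  finally show ?thesis .
qed




lemma frac4: fixes D a b x y :: real shows "D \<noteq> 0 \<Longrightarrow> 1/4*(a/D*x + (-b/D)*y) = (a*x - b*y)/(4*D)"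
  by (simp add: field_simps)
lemma frac4': fixes D a b x y :: real shows "D \<noteq> 0 \<Longrightarrow> 1/4*((-b/D)*x + a/D*y) = (a*y - b*x)/(4*D)"
  by (simp add: field_simps)

lemma G_alg:
  fixes A0 A1 F M y0 y1 N B0 B1 H00 H01 H10 H11 :: real
  assumes e1: "A0*y0 + A1*y1 = F" and Fp: "F > 0" and Mp: "M > 0"
    and h0: "H00*y0 + H01*y1 = B0" and h1: "H10*y0 + H11*y1 = B1" and n: "B0*y0 + B1*y1 = N"
  defines "g00 \<equiv> A0*A0 + F*(M*(-y1)*(-y1))" and "g01 \<equiv> A0*A1 + F*(M*y0*(-y1))"
    and "g10 \<equiv> A1*A0 + F*(M*(-y1)*y0)" and "g11 \<equiv> A1*A1 + F*(M*y0*y0)"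
    and "E0 \<equiv> 2*(B0*A0 + F*H00)*y0 + 2*(B1*A0 + F*H01)*y1 - 2*F*B0"
    and "E1 \<equiv> 2*(B0*A1 + F*H10)*y0 + 2*(B1*A1 + F*H11)*y1 - 2*F*B1"
  shows "1/4 * (g11/(g00*g11 - g01*g10) * E0 + (- g01/(g00*g11 - g01*g10)) * E1) = N/(2*F) * y0"
    and "1/4 * ((- g10/(g00*g11 - g01*g10)) * E0 + g00/(g00*g11 - g01*g10) * E1) = N/(2*F) * y1"
proof -
  have E0: "E0 = 2*N*A0"
  proof -
    have "E0 = 2*A0*(B0*y0 + B1*y1) + 2*F*(H00*y0 + H01*y1) - 2*F*B0"
      unfolding E0_def by (simp add: algebra_simps)
    then show ?thesis using h0 n by simp
  qed
  have E1: "E1 = 2*N*A1"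
  proof -
    have "E1 = 2*A1*(B0*y0 + B1*y1) + 2*F*(H10*y0 + H11*y1) - 2*F*B1"
      unfolding E1_def by (simp add: algebra_simps)
    then show ?thesis using h1 n by simp
  qed
  have d: "g00*g11 - g01*g10 = F*M*(A0*y0 + A1*y1)^2"
    unfolding g00_def g01_def g10_def g11_def by (simp add: algebra_simps power2_eq_square)
  have d': "g00*g11 - g01*g10 = F^3*M" using d e1 by (simp add: power2_eq_square power3_eq_cube)
  have dnz: "g00*g11 - g01*g10 \<noteq> 0" unfolding d' using Fp Mp by simp
  have c0: "g11*A0 - g01*A1 = F^2*M*y0"
  proof -
    have "g11*A0 - g01*A1 = F*M*y0*(A0*y0 + A1*y1)"
      unfolding g01_def g11_def by (simp add: algebra_simps)
    then show ?thesis using e1 by (simp add: power2_eq_square)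
  qed
  have c1: "g00*A1 - g10*A0 = F^2*M*y1"
  proof -
    have "g00*A1 - g10*A0 = F*M*y1*(A0*y0 + A1*y1)"
      unfolding g00_def g10_def by (simp add: algebra_simps)
    then show ?thesis using e1 by (simp add: power2_eq_square)
  qed
  have "1/4 * (g11/(g00*g11 - g01*g10) * E0 + (- g01/(g00*g11 - g01*g10)) * E1)
      = (g11*(2*N*A0) - g01*(2*N*A1))/(4*(g00*g11 - g01*g10))"
    unfolding frac4[OF dnz] E0 E1 ..
  also have "g11*(2*N*A0) - g01*(2*N*A1) = 2*N*(F^2*M*y0)"
    unfolding c0[symmetric] by (simp add: algebra_simps)
  also have "(2*N*(F^2*M*y0))/(4*(g00*g11 - g01*g10)) = N/(2*F) * y0"
    unfolding d' using Fp Mp by (simp add: field_simps power2_eq_square power3_eq_cube)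
  finally show "1/4 * (g11/(g00*g11 - g01*g10) * E0 + (- g01/(g00*g11 - g01*g10)) * E1) = N/(2*F) * y0" .
  have "1/4 * ((- g10/(g00*g11 - g01*g10)) * E0 + g00/(g00*g11 - g01*g10) * E1)
      = (g00*(2*N*A1) - g10*(2*N*A0))/(4*(g00*g11 - g01*g10))"
    unfolding frac4'[OF dnz] E0 E1 ..
  also have "g00*(2*N*A1) - g10*(2*N*A0) = 2*N*(F^2*M*y1)"
    unfolding c1[symmetric] by (simp add: algebra_simps)
  also have "(2*N*(F^2*M*y1))/(4*(g00*g11 - g01*g10)) = N/(2*F) * y1"
    unfolding d' using Fp Mp by (simp add: field_simps power2_eq_square power3_eq_cube)
  finally show "1/4 * ((- g10/(g00*g11 - g01*g10)) * E0 + g00/(g00*g11 - g01*g10) * E1) = N/(2*F) * y1" .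
qed

lemma sum2: "(\<Sum>l<(2::nat). f l) = f 0 + f 1"
  by (simp add: numeral_2_eq_2)

lemma gT_eq: assumes "z \<in> UU" "i < 2" "l < 2"
  shows "gT FF i l z = Fy i z * Fy l z + FF z * (rK^2/(Sx z)^3 * vv l z * vv i z)"
proof -
  have "gT FF i l z = Fd (2+i) z * Fy l z + FF z * Fyd l (2+i) z"
    unfolding gT_def using pd2[OF assms(1), of "2+i" l] assms by simp
  then show ?thesis using Fd_Fy[OF assms(1,2)] E2[OF assms(1,3,2)] by simp
qed

definition "PP z = NN z / (2 * FF z)"

lemma Gspr_eq: assumes z: "z \<in> UU" and i: "i < 2"
  shows "Gspr FF i z = PP z * z (2+i)"
proof -
  note f = UU_facts[OF z]
  have Mp: "rK^2/(Sx z)^3 > 0" using f rK_pos by simp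
  note G = G_alg[OF E1[OF z] FF_pos[OF z] Mp E3[OF z, of 0] E3[OF z, of 1] E4[OF z]]
  have gT0: "gT FF 0 0 z = Fy 0 z * Fy 0 z + FF z * (rK^2/(Sx z)^3 * (- z 3) * (- z 3))"
    "gT FF 0 1 z = Fy 0 z * Fy 1 z + FF z * (rK^2/(Sx z)^3 * z 2 * (- z 3))"
    "gT FF 1 0 z = Fy 1 z * Fy 0 z + FF z * (rK^2/(Sx z)^3 * (- z 3) * z 2)"
    "gT FF 1 1 z = Fy 1 z * Fy 1 z + FF z * (rK^2/(Sx z)^3 * z 2 * z 2)"
    using gT_eq[OF z, of 0 0] gT_eq[OF z, of 0 1] gT_eq[OF z, of 1 0] gT_eq[OF z, of 1 1]
    by (simp_all add: vv_def)
  have pdx: "pd 0 (pd 2 (Fsq FF)) z = 2 * (Fd 0 z * Fy 0 z + FF z * Fyd 0 0 z)"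
    "pd 1 (pd 2 (Fsq FF)) z = 2 * (Fd 1 z * Fy 0 z + FF z * Fyd 0 1 z)"
    "pd 0 (pd 3 (Fsq FF)) z = 2 * (Fd 0 z * Fy 1 z + FF z * Fyd 1 0 z)"
    "pd 1 (pd 3 (Fsq FF)) z = 2 * (Fd 1 z * Fy 1 z + FF z * Fyd 1 1 z)"
    using pd2[OF z, of 0 0] pd2[OF z, of 1 0] pd2[OF z, of 0 1] pd2[OF z, of 1 1] by simp_all
  have pdl: "pd 0 (Fsq FF) z = 2 * FF z * Fd 0 z" "pd 1 (Fsq FF) z = 2 * FF z * Fd 1 z"
    using pd_Fsq[OF z, of 0] pd_Fsq[OF z, of 1] by simp_all
  define d where "d = gT FF 0 0 z * gT FF 1 1 z - gT FF 0 1 z * gT FF 1 0 z"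
  have gI: "gInv FF 0 0 z = gT FF 1 1 z / d" "gInv FF 0 1 z = - gT FF 0 1 z / d"
    "gInv FF 1 0 z = - gT FF 1 0 z / d" "gInv FF 1 1 z = gT FF 0 0 z / d"
    unfolding gInv_def Let_def d_def by simp_all
  have n23: "(2::nat) + 0 = 2" "(2::nat) + 1 = 3" by simp_all
  have Gx: "Gspr FF i z = 1/4 * (gInv FF i 0 z * ((pd 0 (pd 2 (Fsq FF)) z * z 2 + pd 1 (pd 2 (Fsq FF)) z * z 3) - pd 0 (Fsq FF) z)
      + gInv FF i 1 z * ((pd 0 (pd 3 (Fsq FF)) z * z 2 + pd 1 (pd 3 (Fsq FF)) z * z 3) - pd 1 (Fsq FF) z))"
    unfolding Gspr_def sum2 n23 ..
  have i01: "i = 0 \<or> i = 1" using i by auto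
  then show ?thesis
  proof
    assume i0: "i = 0"
    show ?thesis unfolding i0 Gx[unfolded i0] gI pdx pdl n23 PP_def unfolding d_def gT0 by (rule G(1)) simp_all
  next
    assume i1: "i = 1"
    show ?thesis unfolding i1 Gx[unfolded i1] gI pdx pdl n23 PP_def unfolding d_def gT0 by (rule G(2)) simp_all
  qed
qed



definition "NNd m z = (2*(dS m z*px z + Sx z*dP m z)*(ax z)^2 - 2*Sx z*px z*(2*ax z*dA m z))/(ax z)^4
  + bt*((dQ m z*ax z*cx z + qx z*dA m z*cx z + qx z*ax z*dA m z + 2*(2*px z*dP m z)*(cx z+ax z) + 2*(px z)^2*(dA m z + dA m z))*(ax z*cx z)^2
       - (qx z*ax z*cx z + 2*(px z)^2*(cx z+ax z))*(2*(ax z*cx z)*(dA m z*cx z + ax z*dA m z)))/(ax z*cx z)^4"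

lemma line_NN: assumes "z \<in> UU" "m < 4"
  shows "((\<lambda>t. NN (z(m:=t))) has_real_derivative NNd m z) (at (z m))"
proof -
  note f = UU_facts[OF assms(1)]
  show ?thesis unfolding NN_def[abs_def] NNd_def
    apply (rule DERIV_cong)
     apply (rule derivative_eq_intros lines assms refl | (use f in \<open>simp; fail\<close>))+
    using f apply (simp add: field_simps power2_eq_square power4_eq_xxxx)
    done
qed

definition "PPd m z = (NNd m z * (2 * FF z) - NN z * (2 * Fd m z)) / (2 * FF z)^2"

lemma line_PP: assumes "z \<in> UU" "m < 4"
  shows "((\<lambda>t. PP (z(m:=t))) has_real_derivative PPd m z) (at (z m))"
proof -
  have Fp: "FF z > 0" using FF_pos[OF assms(1)] .
  show ?thesis unfolding PP_def[abs_def] PPd_def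
    apply (rule DERIV_cong)
     apply (rule derivative_eq_intros line_NN[OF assms] line_F[OF assms] refl | (use Fp in \<open>simp; fail\<close>))+
    using Fp apply (simp add: field_simps power2_eq_square)
    done
qed

definition "NNy k z = 2*((ax z * z (2+k) + px z * z k)/Sx z * px z + Sx z * z k)/(ax z)^2
   + bt*(2*z (2+k)*ax z*cx z + 4*px z*z k*(cx z + ax z))/(ax z*cx z)^2"
definition "PPy k z = (NNy k z * (2*FF z) - NN z * (2*Fy k z))/(2*FF z)^2"

lemma NNd_y: assumes "z \<in> UU" "k < 2" shows "NNd (2+k) z = NNy k z"
proof -
  note f = UU_facts[OF assms(1)]
  have k01: "k = 0 \<or> k = 1" using assms(2) by auto
  show ?thesis unfolding NNd_def NNy_def dS_def dA_def dP_def dQ_def using f k01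
    by (elim disjE) (simp_all add: field_simps nsuc power2_eq_square power4_eq_xxxx)
qed

lemma PPd_y: assumes "z \<in> UU" "k < 2" shows "PPd (2+k) z = PPy k z"
  unfolding PPd_def PPy_def NNd_y[OF assms] Fd_Fy[OF assms] ..

lemma pd_G: assumes "z \<in> UU" "m < 4" "i < 2"
  shows "pd m (Gspr FF i) z = PPd m z * z (2+i) + PP z * (if 2+i = m then 1 else 0)"
proof -
  have "pd m (Gspr FF i) z = pd m (\<lambda>w. PP w * w (2+i)) z"
    by (rule pd_cong[OF assms(1)]) (rule Gspr_eq[OF _ assms(3)])
  also have "... = PPd m z * z (2+i) + PP z * (if 2+i = m then 1 else 0)"
    apply (rule pd_DERIV)
    apply (rule DERIV_cong)
     apply (rule derivative_eq_intros line_PP[OF assms(1,2)] lines refl)+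
    apply simp
    done
  finally show ?thesis .
qed

lemma pd_Gy: assumes "z \<in> UU" "k < 2" "i < 2"
  shows "pd (2+k) (Gspr FF i) z = PPy k z * z (2+i) + PP z * (if i = k then 1 else 0)"
  using pd_G[OF assms(1) _ assms(3), of "2+k"] assms PPd_y[OF assms(1,2)] by simp




definition "NNyd k m z =
  (let U = ax z * z (2+k) + px z * z k;
       U' = dA m z * z (2+k) + ax z * dl m (2+k) + dP m z * z k + px z * dl m k;
       W = U / Sx z * px z + Sx z * z k;
       W' = (U' * Sx z - U * dS m z) / (Sx z)^2 * px z + U / Sx z * dP m z + dS m z * z k + Sx z * dl m k;
       V = 2 * z (2+k) * ax z * cx z + 4 * px z * z k * (cx z + ax z);
       V' = 2 * dl m (2+k) * ax z * cx z + 2 * z (2+k) * (dA m z * cx z + ax z * dA m z)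
            + 4 * (dP m z * z k + px z * dl m k) * (cx z + ax z) + 4 * px z * z k * (dA m z + dA m z)
   in 2 * (W' * (ax z)^2 - W * (2 * ax z * dA m z)) / (ax z)^4
      + bt * (V' * (ax z * cx z)^2 - V * (2 * (ax z * cx z) * (dA m z * cx z + ax z * dA m z))) / (ax z * cx z)^4)"

lemma line_NNy: assumes "z \<in> UU" "m < 4" "k < 2"
  shows "((\<lambda>t. NNy k (z(m:=t))) has_real_derivative NNyd k m z) (at (z m))"
proof -
  note f = UU_facts[OF assms(1)]
  show ?thesis unfolding NNy_def[abs_def] NNyd_def Let_def
    apply (rule DERIV_cong)
     apply (rule derivative_eq_intros lines assms refl | (use f in \<open>simp; fail\<close>))+
    using f apply (simp add: field_simps power2_eq_square power4_eq_xxxx dl_def eq_commute[of m])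
    done
qed

definition "PPyd k m z =
  (let Num = NNy k z * (2*FF z) - NN z * (2*Fy k z);
       Num' = NNyd k m z * (2*FF z) + NNy k z * (2*Fd m z) - NNd m z * (2*Fy k z) - NN z * (2*Fyd k m z);
       Den = (2*FF z)^2; Den' = 2*(2*FF z)*(2*Fd m z)
   in (Num' * Den - Num * Den') / Den^2)"

lemma line_PPy: assumes "z \<in> UU" "m < 4" "k < 2"
  shows "((\<lambda>t. PPy k (z(m:=t))) has_real_derivative PPyd k m z) (at (z m))"
proof -
  have Fp: "FF z > 0" using FF_pos[OF assms(1)] .
  show ?thesis unfolding PPy_def[abs_def] PPyd_def Let_def
    apply (rule DERIV_cong)
     apply (rule derivative_eq_intros line_NNy[OF assms] line_NN[OF assms(1,2)] line_F[OF assms(1,2)]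
        line_Fy[OF assms] refl | (use Fp in \<open>simp; fail\<close>))+
    done
qed

lemma pd_Gyx: assumes "z \<in> UU" "m < 4" "i < 2"
  shows "pd m (pd (2+i) (Gspr FF i)) z = PPyd i m z * z (2+i) + PPy i z * (if 2+i = m then 1 else 0) + PPd m z"
proof -
  have eq: "\<And>w. w \<in> UU \<Longrightarrow> pd (2+i) (Gspr FF i) w = PPy i w * w (2+i) + PP w"
    using pd_Gy[OF _ assms(3) assms(3)] by simp
  have "pd m (pd (2+i) (Gspr FF i)) z = pd m (\<lambda>w. PPy i w * w (2+i) + PP w) z"
    by (rule pd_cong[OF assms(1) eq])
  also have "... = PPyd i m z * z (2+i) + PPy i z * (if 2+i = m then 1 else 0) + PPd m z"
    apply (rule pd_DERIV)
    apply (rule DERIV_cong)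
     apply (rule derivative_eq_intros line_PPy[OF assms] line_PP[OF assms(1,2)] lines refl)+
    apply simp
    done
  finally show ?thesis .
qed





definition "cK2 = (2 - bt^2) / (2 * rK^2)"

context fixes xi :: "real \<times> real" assumes xi0: "xi \<noteq> (0,0)"
begin

abbreviation "Z \<equiv> pt (0,0) xi"
abbreviation "e1 \<equiv> fst xi"
abbreviation "e2 \<equiv> snd xi"
definition "nn = sqrt ((fst xi)^2 + (snd xi)^2)"

lemma Zv: "Z 0 = 0" "Z 1 = 0" "Z 2 = e1" "Z 3 = e2" "Z (Suc 0) = 0" "Z (Suc (Suc 0)) = e1" "Z (Suc (Suc (Suc 0))) = e2"
  unfolding pt_def by simp_all

lemma qpos: "e1^2 + e2^2 > 0"
proof -
  have "e1 \<noteq> 0 \<or> e2 \<noteq> 0" using xi0 by (cases xi) auto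
  then show ?thesis by (auto simp: add_pos_nonneg add_nonneg_pos)
qed

lemma nn_pos: "nn > 0" unfolding nn_def using qpos by simp
lemma nn2: "nn^2 = e1^2 + e2^2" unfolding nn_def using qpos by simp

lemma ZU: "Z \<in> UU" unfolding UU_def using Zv qpos rK_pos by simp

lemma Zbasic: "ax Z = rK^2" "cx Z = 1" "px Z = 0" "qx Z = nn^2" "Sx Z = rK * nn"
proof -
  show "ax Z = rK^2" "cx Z = 1" "px Z = 0" "qx Z = nn^2"
    unfolding ax_def cx_def px_def qx_def nn2 by (simp_all add: Zv)
  have "Sx Z = sqrt (rK^2 * nn^2)" unfolding Sx_def ax_def qx_def px_def nn2 by (simp add: Zv)
  also have "... = rK * nn" using rK_pos nn_pos by (simp add: real_sqrt_mult)
  finally show "Sx Z = rK * nn" .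
qed

lemma ZdA: "dA m Z = 0" unfolding dA_def by (simp add: Zv)

lemma ZFF: "FF Z = nn / rK" unfolding FF_eq Zbasic using rK_pos by (simp add: power2_eq_square)

lemma ZdS: "dS m Z = rK * dQ m Z / (2 * nn)"
  unfolding dS_def Zbasic ZdA using rK_pos nn_pos by (simp add: field_simps power2_eq_square)

lemma ZFd: "Fd m Z = dS m Z / rK^2 + bt * dP m Z / rK^2"
  unfolding Fd_def Zbasic ZdA using rK_pos by (simp add: field_simps power2_eq_square power4_eq_xxxx)

lemma ZFy: assumes "k < 2" shows "Fy k Z = Z (2+k) / (rK * nn)"
proof -
  have "k = 0 \<or> k = 1" using assms by auto
  then show ?thesis unfolding Fy_def Zbasic using rK_pos nn_pos
    by (elim disjE) (simp_all add: field_simps power2_eq_square Zv)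
qed

lemma ZNN: "NN Z = bt * nn^2 / rK^2"
  unfolding NN_def Zbasic using rK_pos by (simp add: field_simps power2_eq_square)

lemma ZPP: "PP Z = bt * nn / (2 * rK)"
  unfolding PP_def ZNN ZFF using rK_pos nn_pos by (simp add: field_simps power2_eq_square)


lemma ZNNd: "NNd m Z = 2 * nn * dP m Z / rK^3 + bt * dQ m Z / rK^2"
  unfolding NNd_def Zbasic ZdA using rK_pos nn_pos
  by (simp add: field_simps power2_eq_square power3_eq_cube power4_eq_xxxx)

lemma ZNNy: assumes "k < 2" shows "NNy k Z = 2 * bt * Z (2+k) / rK^2"
proof -
  have "k = 0 \<or> k = 1" using assms by auto
  then show ?thesis unfolding NNy_def Zbasic using rK_pos nn_pos
    by (elim disjE) (simp_all add: field_simps power2_eq_square power4_eq_xxxx Zv)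
qed

lemma ZFyd: assumes "k < 2"
  shows "Fyd k m Z = (rK^2 * dl m (2+k) * (rK * nn * rK^2) - rK^2 * Z (2+k) * (dS m Z * rK^2)) / (rK * nn * rK^2)^2
     + bt * dl m k / rK^2"
proof -
  have "k = 0 \<or> k = 1" using assms by auto
  then show ?thesis unfolding Fyd_def Zbasic ZdA using rK_pos nn_pos
    by (elim disjE) (simp_all add: field_simps power2_eq_square Zv)
qed

lemma ZNNyd: assumes "k < 2"
  shows "NNyd k m Z = 2 * (rK * Z (2+k) * dP m Z / nn + rK * nn * dl m k) / rK^4 + 2 * bt * dl m (2+k) / rK^2"
proof -
  have "k = 0 \<or> k = 1" using assms by auto
  then show ?thesis unfolding NNyd_def Let_def Zbasic ZdA using rK_pos nn_pos
    by (elim disjE) (simp_all add: field_simps power2_eq_square power4_eq_xxxx Zv)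
qed


lemma ZPPd: assumes "j < 2" shows "PPd j Z = cK2 * Z (2+j)"
proof -
  have "j = 0 \<or> j = 1" using assms by auto
  then show ?thesis unfolding PPd_def ZNNd ZFF ZNN ZFd ZdS cK2_def using rK_pos nn_pos
    by (elim disjE) (simp_all add: field_simps power2_eq_square power3_eq_cube dP_def dQ_def Zv)
qed

lemma ZPPy: assumes "k < 2" shows "PPy k Z = bt * Z (2+k) / (2 * rK * nn)"
  unfolding PPy_def ZNNy[OF assms] ZFF ZNN ZFy[OF assms] using rK_pos nn_pos
  by (simp add: field_simps power2_eq_square)

lemma ZPPyd_x: assumes "k < 2" "j < 2" shows "PPyd k j Z = cK2 * dl j k"
proof -
  have "k = 0 \<or> k = 1" "j = 0 \<or> j = 1" using assms by auto
  then show ?thesis unfolding PPyd_def Let_def ZNNy[OF assms(1)] ZNNyd[OF assms(1)] ZNNd ZFF ZNN ZFd ZdS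
      ZFy[OF assms(1)] ZFyd[OF assms(1)] cK2_def using rK_pos nn_pos
    by (elim disjE) (simp_all add: field_simps power2_eq_square power3_eq_cube power4_eq_xxxx dP_def dQ_def dl_def Zv)
qed

lemma ZPPyd_y: assumes "k < 2" "j < 2"
  shows "PPyd k (2+j) Z = bt / (2 * rK) * (dl j k / nn - Z (2+k) * Z (2+j) / nn^3)"
proof -
  have "k = 0 \<or> k = 1" "j = 0 \<or> j = 1" using assms by auto
  then show ?thesis unfolding PPyd_def Let_def ZNNy[OF assms(1)] ZNNyd[OF assms(1)] ZNNd ZFF ZNN ZFd ZdS
      ZFy[OF assms(1)] ZFyd[OF assms(1)] using rK_pos nn_pos
    by (elim disjE) (simp_all add: field_simps power2_eq_square power3_eq_cube power4_eq_xxxx dP_def dQ_def dl_def Zv)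
qed


lemma ZRic: "Ric FF Z = nn^2 * (bt^2/(4*rK^2) - cK2)"
proof -
  note U = ZU
  note facts = pd_G[OF U, of 0 0, simplified] pd_G[OF U, of 1 1, simplified]
    pd_Gyx[OF U, of 0 0, simplified] pd_Gyx[OF U, of 1 0, simplified]
    pd_Gyx[OF U, of 0 1, simplified] pd_Gyx[OF U, of 1 1, simplified]
    pd_Gyx[OF U, of 2 0, simplified] pd_Gyx[OF U, of 3 0, simplified]
    pd_Gyx[OF U, of 2 1, simplified] pd_Gyx[OF U, of 3 1, simplified]
    pd_Gy[OF U, of 0 0, simplified] pd_Gy[OF U, of 0 1, simplified]
    pd_Gy[OF U, of 1 0, simplified] pd_Gy[OF U, of 1 1, simplified]
    Gspr_eq[OF U, of 0, simplified] Gspr_eq[OF U, of 1, simplified]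
    PPd_y[OF U, of 0, simplified] PPd_y[OF U, of 1, simplified]
  note vals = ZPP ZPPy[of 0, simplified] ZPPy[of 1, simplified]
    ZPPd[of 0, simplified] ZPPd[of 1, simplified]
    ZPPyd_x[of 0 0, simplified] ZPPyd_x[of 0 1, simplified] ZPPyd_x[of 1 0, simplified] ZPPyd_x[of 1 1, simplified]
    ZPPyd_y[of 0 0, simplified] ZPPyd_y[of 0 1, simplified] ZPPyd_y[of 1 0, simplified] ZPPyd_y[of 1 1, simplified]
  have n2: "nn^2 = e1^2 + e2^2" by (rule nn2)
  have np: "nn > 0" by (rule nn_pos)
  show ?thesis
    unfolding Ric_def Riem_def sum2
    apply (simp add: facts)
    apply (simp add: vals Zv dl_def cK2_def)
    using np rK_pos apply (simp add: field_simps)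
    using n2 apply algebra
    done
qed

end



theorem corollary4p2:
  fixes xi :: "real \<times> real"
  assumes "xi \<noteq> (0, 0)"
  shows "(0, 0) \<in> DK1
    \<and> flag_curv FF (pt (0, 0) xi) = - (1 - 3/4 * (1 - rK^2)^2)
    \<and> - (1 - 3/4 * (1 - rK^2)^2) = - (1 - 3/4 * (4 * exp 2 / (exp 2 + 1)^2)^2)
    \<and> - (1 - 3/4 * (1 - rK^2)^2) < 0"
proof (intro conjI)
  show "(0, 0) \<in> DK1" unfolding DK1_def using rK_pos by simp
  have np: "nn xi > 0" using nn_pos[OF assms] .
  have "flag_curv FF (pt (0, 0) xi) = (nn xi)^2 * (bt^2/(4*rK^2) - cK2) / (nn xi / rK)^2"
    unfolding flag_curv_def ZRic[OF assms] ZFF[OF assms] ..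
  also have "... = - (1 - 3/4 * (1 - rK^2)^2)"
    using np rK_pos by (simp add: cK2_def bt_def field_simps power2_eq_square)
  finally show "flag_curv FF (pt (0, 0) xi) = - (1 - 3/4 * (1 - rK^2)^2)" .
  have e: "exp (2::real) + 1 > 0" by (simp add: add_pos_pos)
  have D: "(exp (2::real) + 1)^2 \<noteq> 0" using e by simp
  have "1 - rK^2 = 1 - (exp 2 - 1)^2 / (exp 2 + 1)^2"
    unfolding rK_def by (simp add: power_divide add.commute)
  also have "... = ((exp 2 + 1)^2 - (exp 2 - 1)^2) / (exp 2 + 1)^2"
    using D by (simp add: diff_divide_distrib)
  also have "(exp 2 + 1)^2 - (exp 2 - 1)^2 = 4 * exp (2::real)"
    by (simp add: power2_eq_square algebra_simps)
  finally have "1 - rK^2 = 4 * exp 2 / (exp 2 + 1)^2" .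
  then show "- (1 - 3/4 * (1 - rK^2)^2) = - (1 - 3/4 * (4 * exp 2 / (exp 2 + 1)^2)^2)" by simp
  have b0: "0 < 1 - rK^2" and b1: "1 - rK^2 < 1" using rK_pos rK_lt1
    by (simp_all add: power_less_one_iff)
  have "(1 - rK^2)^2 < 1" using b0 b1 by (simp add: power_less_one_iff)
  then show "- (1 - 3/4 * (1 - rK^2)^2) < 0" by simp
qed

end
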